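(* In the setting where $T_{zw}(\delta,s)=M_{22}(s)+M_{21}(s)\Delta(\delta)(I-M_{11}(s)\Delta(\delta))^{-1}M_{12}(s)$ with $\Delta(\delta)=\mathrm{diag}[\delta_1 I_{r_1},\dots,\delta_m I_{r_m}]$ and $M$ a fixed real-rational proper transfer matrix, let $\mathbb D=\{\delta\in\mathbb R^m: T_{zw}(\delta)\text{ is (well posed and) internally stable}\}$. Then $h_+:\delta\mapsto\|T_{zw}(\delta)\|_\infty$ is lower-$C^1$ on $\mathbb D$, and consequently $h_-:\delta\mapsto-\|T_{zw}(\delta)\|_\infty$ is upper-$C^1$ on $\mathbb D$.
   Context: A locally Lipschitz function $f:\mathbb R^n\to\mathbb R$ is lower-$C^1$ at $x_0$ if there exist a compact space $\mathbb K$, a neighborhood $U$ of $x_0$ and a mapping $F:\mathbb R^n\times\mathbb K\to\mathbb R$ with $F$ and $\partial F/\partial x$ jointly continuous such that $f(x)=\max_{y\in\mathbb K}F(x,y)$ for all $x\in U$; $f$ is lower-$C^1$ on a set if it is so at each point of the set. $f$ is upper-$C^1$ if $-f$ is lower-$C^1$. $\|\cdot\|_\infty$ is the $H_\infty$ norm, $\|G\|_\infty=\sup_{\omega\in[0,\infty]}\overline\sigma(G(j\omega))$. *)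

theory Defs
  imports "HOL-Analysis.Analysis"
begin

text \<open>The compact parameter space K is taken to be a compact subset of the Hilbert-cube
  ambient space nat => real (product topology); every compact metrizable space embeds there.\<close>

definition lower_C1_at :: "(real^'n \<Rightarrow> real) \<Rightarrow> real^'n \<Rightarrow> bool" where
  "lower_C1_at f x0 \<longleftrightarrow>
     (\<exists>V L. open V \<and> x0 \<in> V \<and> L-lipschitz_on V f) \<and>
     (\<exists>(K :: (nat \<Rightarrow> real) set) U (F :: real^'n \<Rightarrow> (nat \<Rightarrow> real) \<Rightarrow> real)
        (dF :: real^'n \<Rightarrow> (nat \<Rightarrow> real) \<Rightarrow> real^'n).
        compact K \<and> open U \<and> x0 \<in> U \<and>
        continuous_on (UNIV \<times> K) (\<lambda>(x, y). F x y) \<and>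
        continuous_on (UNIV \<times> K) (\<lambda>(x, y). dF x y) \<and>
        (\<forall>x. \<forall>y\<in>K. ((\<lambda>x'. F x' y) has_derivative (\<lambda>h. dF x y \<bullet> h)) (at x)) \<and>
        (\<forall>x\<in>U. (\<exists>y\<in>K. F x y = f x) \<and> (\<forall>y\<in>K. F x y \<le> f x)))"

definition lower_C1_on :: "(real^'n \<Rightarrow> real) \<Rightarrow> (real^'n) set \<Rightarrow> bool" where
  "lower_C1_on f S \<longleftrightarrow> (\<forall>x\<in>S. lower_C1_at f x)"

definition upper_C1_on :: "(real^'n \<Rightarrow> real) \<Rightarrow> (real^'n) set \<Rightarrow> bool" where
  "upper_C1_on f S \<longleftrightarrow> lower_C1_on (\<lambda>x. - f x) S"

definition cmat :: "real^'n^'m \<Rightarrow> complex^'n^'m" where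
  "cmat M = (\<chi> i j. complex_of_real (M $ i $ j))"

definition hurwitz :: "real^'n^'n \<Rightarrow> bool" where
  "hurwitz A \<longleftrightarrow> (\<forall>(lam::complex) (v::complex^'n). v \<noteq> 0 \<and> cmat A *v v = lam *s v \<longrightarrow> Re lam < 0)"

text \<open>Largest singular value = induced Euclidean (2-)operator norm.\<close>
definition sigma_max :: "complex^'n^'m \<Rightarrow> real" where
  "sigma_max G = onorm (\<lambda>v. G *v v)"

definition tf :: "real^'x^'x \<Rightarrow> real^'w^'x \<Rightarrow> real^'x^'z \<Rightarrow> real^'w^'z \<Rightarrow> complex \<Rightarrow> complex^'w^'z" where
  "tf A B C D s = cmat C ** matrix_inv (mat s - cmat A) ** cmat B + cmat D"

text \<open>H-infinity norm of a stable realization: sup over omega in [0, infinity] of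
  sigma_max (G(j omega)); the value at omega = infinity is sigma_max D.\<close>
definition hinf_norm :: "real^'x^'x \<Rightarrow> real^'w^'x \<Rightarrow> real^'x^'z \<Rightarrow> real^'w^'z \<Rightarrow> real" where
  "hinf_norm A B C D =
     Sup ((\<lambda>\<omega>. sigma_max (tf A B C D (\<i> * complex_of_real \<omega>))) ` {0..} \<union> {sigma_max (cmat D)})"

text \<open>Delta(delta) = diag[delta_1 I_r1, ..., delta_m I_rm]: the uncertainty channel is indexed by
  the finite type 'r, and blk i says which parameter delta_k acts on channel coordinate i.\<close>
definition Delta :: "('r \<Rightarrow> 'm) \<Rightarrow> real^'m \<Rightarrow> real^'r^'r" where
  "Delta blk \<delta> = (\<chi> i j. if i = j then \<delta> $ blk i else 0)"

text \<open>M is given by a state-space realization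
   xdot = A x + B1 wD + B2 w,  zD = C1 x + D11 wD + D12 w,  z = C2 x + D21 wD + D22 w,
  closed by wD = Delta(delta) zD.\<close>

definition well_posed :: "real^'r^'r \<Rightarrow> ('r \<Rightarrow> 'm) \<Rightarrow> real^'m \<Rightarrow> bool" where
  "well_posed D11 blk \<delta> \<longleftrightarrow> invertible (mat 1 - D11 ** Delta blk \<delta>)"

definition Phi :: "real^'r^'r \<Rightarrow> ('r \<Rightarrow> 'm) \<Rightarrow> real^'m \<Rightarrow> real^'r^'r" where
  "Phi D11 blk \<delta> = Delta blk \<delta> ** matrix_inv (mat 1 - D11 ** Delta blk \<delta>)"

definition Acl :: "real^'x^'x \<Rightarrow> real^'r^'x \<Rightarrow> real^'x^'r \<Rightarrow> real^'r^'r \<Rightarrow> ('r \<Rightarrow> 'm) \<Rightarrow> real^'m \<Rightarrow> real^'x^'x" where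
  "Acl A B1 C1 D11 blk \<delta> = A + B1 ** Phi D11 blk \<delta> ** C1"

definition Bcl :: "real^'w^'x \<Rightarrow> real^'r^'x \<Rightarrow> real^'w^'r \<Rightarrow> real^'r^'r \<Rightarrow> ('r \<Rightarrow> 'm) \<Rightarrow> real^'m \<Rightarrow> real^'w^'x" where
  "Bcl B2 B1 D12 D11 blk \<delta> = B2 + B1 ** Phi D11 blk \<delta> ** D12"

definition Ccl :: "real^'x^'z \<Rightarrow> real^'r^'z \<Rightarrow> real^'x^'r \<Rightarrow> real^'r^'r \<Rightarrow> ('r \<Rightarrow> 'm) \<Rightarrow> real^'m \<Rightarrow> real^'x^'z" where
  "Ccl C2 D21 C1 D11 blk \<delta> = C2 + D21 ** Phi D11 blk \<delta> ** C1"

definition Dcl :: "real^'w^'z \<Rightarrow> real^'r^'z \<Rightarrow> real^'w^'r \<Rightarrow> real^'r^'r \<Rightarrow> ('r \<Rightarrow> 'm) \<Rightarrow> real^'m \<Rightarrow> real^'w^'z" where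
  "Dcl D22 D21 D12 D11 blk \<delta> = D22 + D21 ** Phi D11 blk \<delta> ** D12"

definition stab_set ::
  "real^'x^'x \<Rightarrow> real^'r^'x \<Rightarrow> real^'x^'r \<Rightarrow> real^'r^'r \<Rightarrow> ('r \<Rightarrow> 'm) \<Rightarrow> (real^'m) set" where
  "stab_set A B1 C1 D11 blk =
     {\<delta>. well_posed D11 blk \<delta> \<and> hurwitz (Acl A B1 C1 D11 blk \<delta>)}"

definition hplus ::
  "real^'x^'x \<Rightarrow> real^'r^'x \<Rightarrow> real^'w^'x \<Rightarrow> real^'x^'r \<Rightarrow> real^'x^'z \<Rightarrow>
   real^'r^'r \<Rightarrow> real^'w^'r \<Rightarrow> real^'r^'z \<Rightarrow> real^'w^'z \<Rightarrow> ('r \<Rightarrow> 'm) \<Rightarrow> real^'m \<Rightarrow> real" where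
  "hplus A B1 B2 C1 C2 D11 D12 D21 D22 blk \<delta> =
     hinf_norm (Acl A B1 C1 D11 blk \<delta>) (Bcl B2 B1 D12 D11 blk \<delta>)
               (Ccl C2 D21 C1 D11 blk \<delta>) (Dcl D22 D21 D12 D11 blk \<delta>)"

end

theory Submission
  imports Defs
begin

definition Cf :: "(real^'m) set \<Rightarrow> 'k::topological_space set \<Rightarrow> (real^'m \<Rightarrow> 'k \<Rightarrow> complex) \<Rightarrow> bool" where
  "Cf V K g \<longleftrightarrow> continuous_on (V \<times> K) (\<lambda>p. g (fst p) (snd p)) \<and>
     (\<exists>d::real^'m \<Rightarrow> 'k \<Rightarrow> complex^'m. continuous_on (V \<times> K) (\<lambda>p. d (fst p) (snd p)) \<and>
        (\<forall>x\<in>V. \<forall>y\<in>K. ((\<lambda>x. g x y) has_derivative (\<lambda>h. \<Sum>i\<in>UNIV. of_real (h$i) * d x y $ i)) (at x)))"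

lemma C1I:
  assumes "continuous_on (V \<times> K) (\<lambda>p. g (fst p) (snd p))"
    "continuous_on (V \<times> K) (\<lambda>p. d (fst p) (snd p))"
    "\<And>x y. x\<in>V \<Longrightarrow> y\<in>K \<Longrightarrow> ((\<lambda>x. g x y) has_derivative (\<lambda>h. \<Sum>i\<in>UNIV. of_real (h$i) * d x y $ i)) (at x)"
  shows "Cf V K g"
  using assms unfolding Cf_def by blast

lemma Cf_cont: "Cf V K g \<Longrightarrow> continuous_on (V \<times> K) (\<lambda>p. g (fst p) (snd p))"
  unfolding Cf_def by blast

lemma C1E:
  assumes "Cf V K g"
  obtains d where "continuous_on (V \<times> K) (\<lambda>p. d (fst p) (snd p))"
     "\<And>x y. x\<in>V \<Longrightarrow> y\<in>K \<Longrightarrow> ((\<lambda>x. g x y) has_derivative (\<lambda>h. \<Sum>i\<in>UNIV. of_real (h$i) * d x y $ i)) (at x)"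
  using assms unfolding Cf_def by blast

lemma Cf_const:
  assumes "continuous_on K c"
  shows "Cf V K (\<lambda>x y. c y)"
proof (rule C1I[where d="\<lambda>x y. 0"])
  show "continuous_on (V \<times> K) (\<lambda>p. c (snd p))"
    by (rule continuous_on_compose2[OF assms continuous_on_snd]) auto
qed auto

lemma Cf_coord:
  fixes V :: "(real^'m) set"
  shows "Cf V K (\<lambda>x y. complex_of_real (x$k))"
proof (rule C1I[where d="\<lambda>x y. axis k 1"])
  show "continuous_on (V \<times> K) (\<lambda>p. complex_of_real (fst p $ k))"
    by (intro continuous_on_of_real continuous_on_component continuous_on_fst continuous_on_id)
  fix x y
  have "bounded_linear (\<lambda>h::real^'m. complex_of_real (h$k))"
    by (rule bounded_linear_compose[OF bounded_linear_of_real bounded_linear_vec_nth])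
  then have "((\<lambda>x::real^'m. complex_of_real (x$k)) has_derivative (\<lambda>h. complex_of_real (h$k))) (at x)"
    by (rule bounded_linear_imp_has_derivative)
  moreover have "(\<lambda>h::real^'m. complex_of_real (h$k)) = (\<lambda>h. \<Sum>i\<in>UNIV. of_real (h$i) * axis k 1 $ i)"
  proof
    fix h :: "real^'m"
    have "(\<Sum>i\<in>UNIV. of_real (h$i) * axis k 1 $ i) = (\<Sum>i\<in>UNIV. if i = k then complex_of_real (h$i) else 0)"
      by (rule sum.cong) (auto simp: axis_def)
    also have "\<dots> = complex_of_real (h$k)" by (simp add: sum.delta')
    finally show "complex_of_real (h$k) = (\<Sum>i\<in>UNIV. of_real (h$i) * axis k 1 $ i)" by simp
  qed
  ultimately show "((\<lambda>x. complex_of_real (x $ k)) has_derivative (\<lambda>h. \<Sum>i\<in>UNIV. complex_of_real (h $ i) * axis k 1 $ i)) (at x)"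
    by metis
qed auto

lemma Cf_add:
  assumes "Cf V K f" "Cf V K g"
  shows "Cf V K (\<lambda>x y. f x y + g x y)"
proof -
  obtain df where df: "continuous_on (V \<times> K) (\<lambda>p. df (fst p) (snd p))"
     "\<And>x y. x\<in>V \<Longrightarrow> y\<in>K \<Longrightarrow> ((\<lambda>x. f x y) has_derivative (\<lambda>h. \<Sum>i\<in>UNIV. of_real (h$i) * df x y $ i)) (at x)"
    by (rule C1E[OF assms(1)]) blast
  obtain dg where dg: "continuous_on (V \<times> K) (\<lambda>p. dg (fst p) (snd p))"
     "\<And>x y. x\<in>V \<Longrightarrow> y\<in>K \<Longrightarrow> ((\<lambda>x. g x y) has_derivative (\<lambda>h. \<Sum>i\<in>UNIV. of_real (h$i) * dg x y $ i)) (at x)"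
    by (rule C1E[OF assms(2)]) blast
  show ?thesis
  proof (rule C1I[where d="\<lambda>x y. df x y + dg x y"])
    show "continuous_on (V \<times> K) (\<lambda>p. f (fst p) (snd p) + g (fst p) (snd p))"
      using Cf_cont[OF assms(1)] Cf_cont[OF assms(2)] by (intro continuous_intros)
    show "continuous_on (V \<times> K) (\<lambda>p. df (fst p) (snd p) + dg (fst p) (snd p))"
      using df dg by (intro continuous_intros)
    fix x y assume "x \<in> V" "y \<in> K"
    show "((\<lambda>x. f x y + g x y) has_derivative (\<lambda>h. \<Sum>i\<in>UNIV. of_real (h$i) * (df x y + dg x y) $ i)) (at x)"
    proof (rule has_derivative_eq_rhs[OF has_derivative_add[OF df(2) dg(2)]])
      show "x \<in> V" "y \<in> K" "x \<in> V" "y \<in> K" by fact+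
      show "(\<lambda>h. (\<Sum>i\<in>UNIV. of_real (h$i) * df x y $ i) + (\<Sum>i\<in>UNIV. of_real (h$i) * dg x y $ i)) =
        (\<lambda>h. \<Sum>i\<in>UNIV. of_real (h$i) * (df x y + dg x y) $ i)"
        by (simp add: ring_distribs sum.distrib)
    qed
  qed
qed

lemma Cf_mult:
  assumes "Cf V K f" "Cf V K g"
  shows "Cf V K (\<lambda>x y. f x y * g x y)"
proof -
  obtain df where df: "continuous_on (V \<times> K) (\<lambda>p. df (fst p) (snd p))"
     "\<And>x y. x\<in>V \<Longrightarrow> y\<in>K \<Longrightarrow> ((\<lambda>x. f x y) has_derivative (\<lambda>h. \<Sum>i\<in>UNIV. of_real (h$i) * df x y $ i)) (at x)"
    by (rule C1E[OF assms(1)]) blast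
  obtain dg where dg: "continuous_on (V \<times> K) (\<lambda>p. dg (fst p) (snd p))"
     "\<And>x y. x\<in>V \<Longrightarrow> y\<in>K \<Longrightarrow> ((\<lambda>x. g x y) has_derivative (\<lambda>h. \<Sum>i\<in>UNIV. of_real (h$i) * dg x y $ i)) (at x)"
    by (rule C1E[OF assms(2)]) blast
  note cf = Cf_cont[OF assms(1)] and cg = Cf_cont[OF assms(2)]
  show ?thesis
  proof (rule C1I[where d="\<lambda>x y. (\<chi> i. f x y * dg x y $ i + df x y $ i * g x y)"])
    show "continuous_on (V \<times> K) (\<lambda>p. f (fst p) (snd p) * g (fst p) (snd p))"
      using cf cg by (intro continuous_intros)
    show "continuous_on (V \<times> K) (\<lambda>p. (\<chi> i. f (fst p) (snd p) * dg (fst p) (snd p) $ i + df (fst p) (snd p) $ i * g (fst p) (snd p)))"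
      using cf cg df(1) dg(1)
      by (intro continuous_on_vec_lambda continuous_on_add continuous_on_mult continuous_on_component) auto
    fix x y assume "x \<in> V" "y \<in> K"
    show "((\<lambda>x. f x y * g x y) has_derivative (\<lambda>h. \<Sum>i\<in>UNIV. of_real (h$i) * (\<chi> i. f x y * dg x y $ i + df x y $ i * g x y) $ i)) (at x)"
    proof (rule has_derivative_eq_rhs[OF has_derivative_mult[OF df(2) dg(2)]])
      show "x \<in> V" "y \<in> K" "x \<in> V" "y \<in> K" by fact+
      show "(\<lambda>h. f x y * (\<Sum>i\<in>UNIV. of_real (h$i) * dg x y $ i) + (\<Sum>i\<in>UNIV. of_real (h$i) * df x y $ i) * g x y) =
        (\<lambda>h. \<Sum>i\<in>UNIV. of_real (h$i) * (\<chi> i. f x y * dg x y $ i + df x y $ i * g x y) $ i)"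
      proof
        fix h :: "real^'a"
        have "(\<Sum>i\<in>UNIV. of_real (h$i) * (\<chi> i. f x y * dg x y $ i + df x y $ i * g x y) $ i)
           = (\<Sum>i\<in>UNIV. f x y * (of_real (h$i) * dg x y $ i) + (of_real (h$i) * df x y $ i) * g x y)"
          by (rule sum.cong) (simp_all add: ring_distribs)
        also have "\<dots> = f x y * (\<Sum>i\<in>UNIV. of_real (h$i) * dg x y $ i) + (\<Sum>i\<in>UNIV. of_real (h$i) * df x y $ i) * g x y"
          by (simp add: sum.distrib sum_distrib_left sum_distrib_right)
        finally show "f x y * (\<Sum>i\<in>UNIV. of_real (h$i) * dg x y $ i) + (\<Sum>i\<in>UNIV. of_real (h$i) * df x y $ i) * g x y =
           (\<Sum>i\<in>UNIV. of_real (h$i) * (\<chi> i. f x y * dg x y $ i + df x y $ i * g x y) $ i)" by simp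
      qed
    qed
  qed
qed

lemma Cf_cong: "Cf V K f \<Longrightarrow> (\<And>x y. f x y = g x y) \<Longrightarrow> Cf V K g"
proof -
  assume "Cf V K f" "\<And>x y. f x y = g x y"
  then have "f = g" by (intro ext)
  with \<open>Cf V K f\<close> show ?thesis by simp
qed

lemma Cf_cong_on:
  assumes "Cf V K f" "open V" "\<And>x y. x \<in> V \<Longrightarrow> y \<in> K \<Longrightarrow> f x y = g x y"
  shows "Cf V K g"
proof -
  obtain d where d: "continuous_on (V \<times> K) (\<lambda>p. d (fst p) (snd p))"
     "\<And>x y. x\<in>V \<Longrightarrow> y\<in>K \<Longrightarrow> ((\<lambda>x. f x y) has_derivative (\<lambda>h. \<Sum>i\<in>UNIV. of_real (h$i) * d x y $ i)) (at x)"
    by (rule C1E[OF assms(1)]) blast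
  show ?thesis
  proof (rule C1I[OF _ d(1)])
    show "continuous_on (V \<times> K) (\<lambda>p. g (fst p) (snd p))"
      using Cf_cont[OF assms(1)] by (rule continuous_on_cong[THEN iffD1, rotated 2]) (auto simp: assms(3))
    fix x y assume "x \<in> V" "y \<in> K"
    show "((\<lambda>x. g x y) has_derivative (\<lambda>h. \<Sum>i\<in>UNIV. of_real (h$i) * d x y $ i)) (at x)"
      by (rule has_derivative_transform_within_open[OF d(2) assms(2)]) (use \<open>x \<in> V\<close> \<open>y \<in> K\<close> assms(3) in auto)
  qed
qed

lemma Cf_constc: "Cf V K (\<lambda>x y. c)"
  using Cf_const[of K "\<lambda>y. c"] by simp

lemma Cf_uminus: "Cf V K f \<Longrightarrow> Cf V K (\<lambda>x y. - f x y)"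
  by (rule Cf_cong[OF Cf_mult[OF Cf_constc[of V K "-1"]]]) auto

lemma Cf_diff: "Cf V K f \<Longrightarrow> Cf V K g \<Longrightarrow> Cf V K (\<lambda>x y. f x y - g x y)"
  by (rule Cf_cong[OF Cf_add[OF _ Cf_uminus]]) auto

lemma Cf_sum:
  assumes "finite I" "\<And>i. i \<in> I \<Longrightarrow> Cf V K (f i)"
  shows "Cf V K (\<lambda>x y. \<Sum>i\<in>I. f i x y)"
  using assms
proof (induction I rule: finite_induct)
  case empty
  then show ?case using Cf_constc[of V K 0] by simp
next
  case (insert a I)
  have "Cf V K (\<lambda>x y. f a x y + (\<Sum>i\<in>I. f i x y))"
    using insert by (intro Cf_add) auto
  then show ?case using insert by simp
qed

lemma Cf_prod:
  assumes "finite I" "\<And>i. i \<in> I \<Longrightarrow> Cf V K (f i)"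
  shows "Cf V K (\<lambda>x y. \<Prod>i\<in>I. f i x y)"
  using assms
proof (induction I rule: finite_induct)
  case empty
  then show ?case using Cf_constc[of V K 1] by simp
next
  case (insert a I)
  have "Cf V K (\<lambda>x y. f a x y * (\<Prod>i\<in>I. f i x y))"
    using insert by (intro Cf_mult) auto
  then show ?case using insert by simp
qed

lemma Cf_inverse:
  assumes "Cf V K g" and nz: "\<And>x y. x \<in> V \<Longrightarrow> y \<in> K \<Longrightarrow> g x y \<noteq> 0"
  shows "Cf V K (\<lambda>x y. inverse (g x y))"
proof -
  obtain dg where dg: "continuous_on (V \<times> K) (\<lambda>p. dg (fst p) (snd p))"
     "\<And>x y. x\<in>V \<Longrightarrow> y\<in>K \<Longrightarrow> ((\<lambda>x. g x y) has_derivative (\<lambda>h. \<Sum>i\<in>UNIV. of_real (h$i) * dg x y $ i)) (at x)"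
    by (rule C1E[OF assms(1)]) blast
  note cg = Cf_cont[OF assms(1)]
  have nz': "\<And>p. p \<in> V \<times> K \<Longrightarrow> g (fst p) (snd p) \<noteq> 0" using nz by auto
  show ?thesis
  proof (rule C1I[where d="\<lambda>x y. (\<chi> i. - (inverse (g x y) * dg x y $ i * inverse (g x y)))"])
    show "continuous_on (V \<times> K) (\<lambda>p. inverse (g (fst p) (snd p)))"
      using cg nz' by (intro continuous_on_inverse) auto
    show "continuous_on (V \<times> K) (\<lambda>p. (\<chi> i. - (inverse (g (fst p) (snd p)) * dg (fst p) (snd p) $ i * inverse (g (fst p) (snd p)))))"
      using cg dg(1) nz'
      by (intro continuous_on_vec_lambda continuous_on_minus continuous_on_mult continuous_on_inverse continuous_on_component) auto
    fix x y assume "x \<in> V" "y \<in> K"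
    show "((\<lambda>x. inverse (g x y)) has_derivative (\<lambda>h. \<Sum>i\<in>UNIV. of_real (h$i) * (\<chi> i. - (inverse (g x y) * dg x y $ i * inverse (g x y))) $ i)) (at x)"
    proof (rule has_derivative_eq_rhs[OF Deriv.has_derivative_inverse[OF nz dg(2)]])
      show "x \<in> V" "y \<in> K" "x \<in> V" "y \<in> K" by fact+
      show "(\<lambda>h. - (inverse (g x y) * (\<Sum>i\<in>UNIV. of_real (h$i) * dg x y $ i) * inverse (g x y))) =
        (\<lambda>h. \<Sum>i\<in>UNIV. of_real (h$i) * (\<chi> i. - (inverse (g x y) * dg x y $ i * inverse (g x y))) $ i)"
      proof
        fix h :: "real^'a"
        show "- (inverse (g x y) * (\<Sum>i\<in>UNIV. of_real (h$i) * dg x y $ i) * inverse (g x y)) =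
           (\<Sum>i\<in>UNIV. of_real (h$i) * (\<chi> i. - (inverse (g x y) * dg x y $ i * inverse (g x y))) $ i)"
          by (simp add: sum_distrib_left sum_distrib_right sum_negf[symmetric] mult_ac)
      qed
    qed
  qed
qed

definition CfM :: "(real^'m) set \<Rightarrow> 'k::topological_space set \<Rightarrow> (real^'m \<Rightarrow> 'k \<Rightarrow> complex^'b^'a) \<Rightarrow> bool" where
  "CfM V K M \<longleftrightarrow> (\<forall>i j. Cf V K (\<lambda>x y. M x y $ i $ j))"

lemma CfM_entry: "CfM V K M \<Longrightarrow> Cf V K (\<lambda>x y. M x y $ i $ j)"
  unfolding CfM_def by blast

lemma CfM_const: "continuous_on K C \<Longrightarrow> CfM V K (\<lambda>x y. C y)"
  unfolding CfM_def by (intro allI Cf_const continuous_on_component)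

lemma CfM_constc: "CfM V K (\<lambda>x y. C)"
  unfolding CfM_def by (intro allI Cf_constc)

lemma CfM_add: "CfM V K A \<Longrightarrow> CfM V K B \<Longrightarrow> CfM V K (\<lambda>x y. A x y + B x y)"
  unfolding CfM_def by (simp add: Cf_add)

lemma CfM_diff: "CfM V K A \<Longrightarrow> CfM V K B \<Longrightarrow> CfM V K (\<lambda>x y. A x y - B x y)"
  unfolding CfM_def by (simp add: Cf_diff)

lemma CfM_mult:
  assumes "CfM V K A" "CfM V K B"
  shows "CfM V K (\<lambda>x y. A x y ** B x y)"
  unfolding CfM_def matrix_matrix_mult_def
  using assms by (auto intro!: Cf_sum Cf_mult CfM_entry)

lemma CfM_scal:
  assumes "Cf V K c" "CfM V K A"
  shows "CfM V K (\<lambda>x y. (\<chi> i j. c x y * A x y $ i $ j))"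
  unfolding CfM_def using assms by (auto intro!: Cf_mult CfM_entry)

lemma Cf_det:
  assumes "CfM V K A"
  shows "Cf V K (\<lambda>x y. det (A x y))"
  unfolding det_def
  using assms by (auto intro!: Cf_sum Cf_mult Cf_prod Cf_constc CfM_entry finite_permutations)

lemma matrix_inv_works:
  fixes A :: "'a::semiring_1^'n^'m"
  assumes "invertible A"
  shows "A ** matrix_inv A = mat 1" "matrix_inv A ** A = mat 1"
proof -
  have "\<exists>A'. A ** A' = mat 1 \<and> A' ** A = mat 1" using assms unfolding invertible_def by blast
  then have "A ** matrix_inv A = mat 1 \<and> matrix_inv A ** A = mat 1"
    unfolding matrix_inv_def by (rule someI_ex)
  then show "A ** matrix_inv A = mat 1" "matrix_inv A ** A = mat 1" by auto
qed

lemma matrix_inv_unique: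
  fixes A :: "'a::semiring_1^'n^'m"
  assumes "A ** B = mat 1" "B ** A = mat 1"
  shows "matrix_inv A = B"
proof -
  have inv: "invertible A" using assms unfolding invertible_def by blast
  have "matrix_inv A = matrix_inv A ** (A ** B)" by (simp add: assms)
  also have "\<dots> = (matrix_inv A ** A) ** B" by (simp add: matrix_mul_assoc)
  also have "\<dots> = B" by (simp add: matrix_inv_works[OF inv])
  finally show ?thesis .
qed

lemma matrix_inv_cramer:
  fixes A :: "'a::field^'n^'n"
  assumes d: "det A \<noteq> 0"
  shows "matrix_inv A $ i $ j = det (\<chi> r c. if c = i then (if r = j then 1 else 0) else A$r$c) / det A"
proof -
  have inv: "invertible A" using d invertible_det_nz by blast
  let ?X = "matrix_inv A"
  have "A *v (?X *v axis j 1) = axis j 1"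
    by (simp add: matrix_vector_mul_assoc matrix_inv_works[OF inv])
  then have "?X *v axis j 1 = (\<chi> k. det(\<chi> r c. if c=k then axis j 1 $ r else A$r$c) / det A)"
    using cramer[OF d] by blast
  then have "(?X *v axis j 1) $ i = det(\<chi> r c. if c=i then axis j 1 $ r else A$r$c) / det A"
    by simp
  moreover have "(?X *v axis j 1) $ i = ?X $ i $ j"
    by (simp add: matrix_vector_mult_def axis_def if_distrib sum.delta' cong: if_cong)
  moreover have "(\<chi> r c. if c=i then axis j 1 $ r else A$r$c) = (\<chi> r c. if c = i then (if r = j then 1 else 0) else A$r$c)"
    by (auto simp: axis_def vec_eq_iff)
  ultimately show ?thesis by simp
qed

lemma CfM_inv:
  assumes "CfM V K A" "\<And>x y. x \<in> V \<Longrightarrow> y \<in> K \<Longrightarrow> det (A x y) \<noteq> 0" "open V"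
  shows "CfM V K (\<lambda>x y. matrix_inv (A x y))"
proof -
  have *: "Cf V K (\<lambda>x y. det (\<chi> r c. if c = i then (if r = j then 1 else 0) else A x y $r$c) * inverse (det (A x y)))" for i j
  proof (intro Cf_mult Cf_inverse Cf_det assms(2))
    show "CfM V K (\<lambda>x y. \<chi> r c. if c = i then if r = j then 1 else 0 else A x y $ r $ c)"
      unfolding CfM_def
    proof (intro allI)
      fix r c
      show "Cf V K (\<lambda>x y. (\<chi> r c. if c = i then if r = j then 1 else 0 else A x y $ r $ c) $ r $ c)"
        by (cases "c = i"; cases "r = j") (auto intro: Cf_constc CfM_entry[OF assms(1)])
    qed
  qed (use assms in auto)
  show ?thesis
    unfolding CfM_def
  proof (intro allI)
    fix i j
    show "Cf V K (\<lambda>x y. matrix_inv (A x y) $ i $ j)"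
      by (rule Cf_cong_on[OF *[of i j] assms(3)]) (simp add: matrix_inv_cramer[OF assms(2)] divide_inverse)
  qed
qed

definition sat :: "real \<Rightarrow> real \<Rightarrow> real" where
  "sat r t = (if t > r then 2*r - r^2/t else if t < -r then -2*r - r^2/t else t)"

definition sat' :: "real \<Rightarrow> real \<Rightarrow> real" where
  "sat' r t = r^2 / (max r \<bar>t\<bar>)^2"

lemma deriv_glue:
  fixes f :: "real \<Rightarrow> real"
  assumes "((\<lambda>y. (f y - f a)/(y - a)) \<longlongrightarrow> D) (at_left a)"
    "((\<lambda>y. (f y - f a)/(y - a)) \<longlongrightarrow> D) (at_right a)"
  shows "(f has_real_derivative D) (at a)"
  unfolding has_field_derivative_iff using assms filterlim_at_split by blast

lemma sat_id: "\<bar>t\<bar> \<le> r \<Longrightarrow> sat r t = t"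
  by (auto simp: sat_def)

lemma sat_bound: assumes "r > 0" shows "\<bar>sat r t\<bar> \<le> 2*r"
proof -
  have "\<bar>2*r - r^2/t\<bar> \<le> 2*r" if "t > r" for t
  proof -
    have "r^2/t \<le> r" using that assms by (simp add: divide_le_eq power2_eq_square)
    moreover have "r^2/t \<ge> 0" using that assms by simp
    ultimately show ?thesis by linarith
  qed
  moreover have "\<bar>-2*r - r^2/t\<bar> \<le> 2*r" if "t < -r" for t
  proof -
    have "r*r \<le> r*(-t)" using that assms by (intro mult_left_mono) auto
    then have "r^2/(-t) \<le> r" using that assms by (subst pos_divide_le_eq) (auto simp: power2_eq_square)
    moreover have "r^2/(-t) \<ge> 0" using that assms by (intro divide_nonneg_nonneg) auto
    moreover have "r^2/(-t) = - (r^2/t)" by simp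
    ultimately show ?thesis by linarith
  qed
  ultimately show ?thesis using assms by (auto simp: sat_def)
qed

lemma sat_deriv:
  assumes r: "r > 0"
  shows "(sat r has_real_derivative sat' r t) (at t)"
proof -
  consider "t > r" | "t < -r" | "\<bar>t\<bar> < r" | "t = r" | "t = -r" by linarith
  then show ?thesis
  proof cases
    case 1
    have "((\<lambda>t. 2*r - r^2/t) has_real_derivative (r^2/t^2)) (at t)"
      using 1 r by (auto intro!: derivative_eq_intros simp: power2_eq_square field_simps)
    then have "(sat r has_real_derivative r^2/t^2) (at t)"
      by (rule has_field_derivative_transform_within_open[where S="{r<..}"]) (use 1 r in \<open>auto simp: sat_def\<close>)
    moreover have "sat' r t = r^2/t^2" using 1 r by (auto simp: sat'_def power2_eq_square)
    ultimately show ?thesis by simp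
  next
    case 2
    have "((\<lambda>t. -2*r - r^2/t) has_real_derivative (r^2/t^2)) (at t)"
      using 2 r by (auto intro!: derivative_eq_intros simp: power2_eq_square field_simps)
    then have "(sat r has_real_derivative r^2/t^2) (at t)"
      by (rule has_field_derivative_transform_within_open[where S="{..<-r}"]) (use 2 r in \<open>auto simp: sat_def\<close>)
    moreover have "sat' r t = r^2/t^2" using 2 r by (auto simp: sat'_def power2_eq_square)
    ultimately show ?thesis by simp
  next
    case 3
    have "((\<lambda>t. t) has_real_derivative 1) (at t)" by (rule DERIV_ident)
    then have "(sat r has_real_derivative 1) (at t)"
      by (rule has_field_derivative_transform_within_open[where S="{-r<..<r}"]) (use 3 r in \<open>auto simp: sat_def\<close>)
    moreover have "sat' r t = 1" using 3 r by (auto simp: sat'_def power2_eq_square)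
    ultimately show ?thesis by simp
  next
    case 4
    have d: "sat' r t = 1" using 4 r by (simp add: sat'_def)
    show ?thesis unfolding d
    proof (rule deriv_glue)
      have "eventually (\<lambda>y. 1 = (sat r y - sat r t)/(y - t)) (at_left t)"
        unfolding eventually_at_left_field using 4 r
        by (intro exI[of _ "-r"]) (auto simp: sat_def)
      then show "((\<lambda>y. (sat r y - sat r t)/(y - t)) \<longlongrightarrow> 1) (at_left t)"
        by (rule Lim_transform_eventually[OF tendsto_const])
      have "eventually (\<lambda>y. r / y = (sat r y - sat r t)/(y - t)) (at_right t)"
        unfolding eventually_at_right_field using 4 r
        by (intro exI[of _ "r+1"]) (auto simp: sat_def field_simps power2_eq_square)
      moreover have "((\<lambda>y. r / y) \<longlongrightarrow> r / r) (at_right t)"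
        using r 4 by (intro tendsto_intros) auto
      ultimately show "((\<lambda>y. (sat r y - sat r t)/(y - t)) \<longlongrightarrow> 1) (at_right t)"
        using r by (auto intro: Lim_transform_eventually)
    qed
  next
    case 5
    have d: "sat' r t = 1" using 5 r by (simp add: sat'_def)
    show ?thesis unfolding d
    proof (rule deriv_glue)
      have "eventually (\<lambda>y. 1 = (sat r y - sat r t)/(y - t)) (at_right t)"
        unfolding eventually_at_right_field using 5 r
        by (intro exI[of _ "r"]) (auto simp: sat_def)
      then show "((\<lambda>y. (sat r y - sat r t)/(y - t)) \<longlongrightarrow> 1) (at_right t)"
        by (rule Lim_transform_eventually[OF tendsto_const])
      have "eventually (\<lambda>y. -r / y = (sat r y - sat r t)/(y - t)) (at_left t)"
        unfolding eventually_at_left_field using 5 r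
      proof (intro exI[of _ "-r-1"] conjI allI impI)
        fix y assume y: "y > -r-1" "y < t"
        have "y < 0" "y + r < 0" using y 5 r by auto
        then have "y \<noteq> 0" "y + r \<noteq> 0" by auto
        have q: "sat r y - sat r t = -r * (y + r) / y" using y 5 r \<open>y \<noteq> 0\<close>
          by (auto simp: sat_def field_simps power2_eq_square)
        show "-r / y = (sat r y - sat r t)/(y - t)" unfolding q using 5 \<open>y \<noteq> 0\<close> \<open>y + r \<noteq> 0\<close> by simp
      qed (use 5 r in auto)
      moreover have "((\<lambda>y. -r / y) \<longlongrightarrow> -r / -r) (at_left t)"
        using r 5 by (intro tendsto_intros) auto
      ultimately show "((\<lambda>y. (sat r y - sat r t)/(y - t)) \<longlongrightarrow> 1) (at_left t)"
        using r by (auto intro: Lim_transform_eventually)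
    qed
  qed
qed

lemma sat'_cont: "r > 0 \<Longrightarrow> continuous_on UNIV (sat' r)"
  unfolding sat'_def by (intro continuous_intros) auto

lemma mv_bounded_linear:
  fixes M :: "complex^'w^'z"
  shows "bounded_linear (\<lambda>v. M *v v)"
proof -
  have "linear (\<lambda>v. M *v v)"
  proof (rule linearI)
    fix a b :: "complex^'w"
    show "M *v (a + b) = M *v a + M *v b" by (simp add: matrix_vector_right_distrib)
    fix r :: real
    show "M *v (r *\<^sub>R b) = r *\<^sub>R (M *v b)"
      by (simp add: vec_eq_iff matrix_vector_mult_def scaleR_sum_right)
  qed
  then show ?thesis by (simp add: linear_conv_bounded_linear)
qed

lemma re_inner: "Re (\<Sum>i\<in>UNIV. cnj (u$i) * w$i) = u \<bullet> (w :: complex^'n)"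
  by (simp add: inner_vec_def inner_complex_def)

lemma sv_le:
  fixes M :: "complex^'w^'z"
  assumes "norm u = 1" "norm v = 1"
  shows "Re (\<Sum>i\<in>UNIV. cnj (u$i) * (M *v v)$i) \<le> sigma_max M"
proof -
  have "Re (\<Sum>i\<in>UNIV. cnj (u$i) * (M *v v)$i) = u \<bullet> (M *v v)" by (rule re_inner)
  also have "\<dots> \<le> norm u * norm (M *v v)" by (rule norm_cauchy_schwarz)
  also have "\<dots> = norm (M *v v)" using assms by simp
  also have "\<dots> \<le> onorm (\<lambda>v. M *v v) * norm v" by (rule onorm[OF mv_bounded_linear])
  finally show ?thesis using assms by (simp add: sigma_max_def)
qed

lemma sv_attained:
  fixes M :: "complex^'w^'z"
  shows "\<exists>u v. norm u = 1 \<and> norm v = 1 \<and> Re (\<Sum>i\<in>UNIV. cnj (u$i) * (M *v v)$i) = sigma_max M"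
proof -
  have "\<exists>v\<in>sphere (0::complex^'w) 1. \<forall>y\<in>sphere 0 1. norm (M *v y) \<le> norm (M *v v)"
    by (rule continuous_attains_sup)
      (auto intro!: continuous_on_norm linear_continuous_on[OF mv_bounded_linear] compact_sphere)
  then obtain v :: "complex^'w" where v: "norm v = 1" and vmax: "\<And>y. norm y = 1 \<Longrightarrow> norm (M *v y) \<le> norm (M *v v)"
    by auto
  interpret L: bounded_linear "\<lambda>v. M *v v" by (rule mv_bounded_linear)
  have "onorm (\<lambda>v. M *v v) \<le> norm (M *v v)"
  proof (rule onorm_le)
    fix x :: "complex^'w"
    show "norm (M *v x) \<le> norm (M *v v) * norm x"
    proof (cases "x = 0")
      case True then show ?thesis by (simp add: L.zero)
    next
      case False
      have "M *v x = norm x *\<^sub>R (M *v (inverse (norm x) *\<^sub>R x))"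
        using False by (simp add: L.scaleR)
      then have "norm (M *v x) = norm x * norm (M *v (inverse (norm x) *\<^sub>R x))" by simp
      also have "\<dots> \<le> norm x * norm (M *v v)"
        using False by (intro mult_left_mono vmax) auto
      finally show ?thesis by (simp add: mult.commute)
    qed
  qed
  moreover have "norm (M *v v) \<le> onorm (\<lambda>v. M *v v)"
    using onorm[OF mv_bounded_linear, of M v] v by simp
  ultimately have sv: "sigma_max M = norm (M *v v)" by (simp add: sigma_max_def)
  show ?thesis
  proof (cases "M *v v = 0")
    case True
    have "sphere (0::complex^'z) 1 \<noteq> {}" by simp
    then obtain u :: "complex^'z" where "u \<in> sphere 0 1" by blast
    then have "norm u = 1" by simp
    moreover have "Re (\<Sum>i\<in>UNIV. cnj (u$i) * (M *v v)$i) = sigma_max M"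
      unfolding re_inner using True sv by simp
    ultimately show ?thesis using v by blast
  next
    case False
    define u where "u = inverse (norm (M *v v)) *\<^sub>R (M *v v)"
    have "norm u = 1" using False by (simp add: u_def)
    moreover have "u \<bullet> (M *v v) = norm (M *v v)"
      using False by (simp add: u_def inner_commute dot_square_norm power2_eq_square)
    then have "Re (\<Sum>i\<in>UNIV. cnj (u$i) * (M *v v)$i) = sigma_max M"
      unfolding re_inner using sv by simp
    ultimately show ?thesis using v by blast
  qed
qed

definition ZS :: "complex set" where "ZS = {z. cmod z = 1 \<and> 0 \<le> Im z}"

lemma one_ZS: "1 \<in> ZS" by (simp add: ZS_def)

lemma compact_ZS: "compact ZS"
proof -
  have "ZS = sphere 0 1 \<inter> {z. 0 \<le> Im z}" by (auto simp: ZS_def)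
  moreover have "closed {z. 0 \<le> Im z}"
    by (intro closed_Collect_le continuous_on_const continuous_on_Im continuous_on_id)
  ultimately show ?thesis using compact_Int_closed[OF compact_sphere] by metis
qed

lemma ZS_re:
  assumes "cmod z = 1" "z \<noteq> 1"
  shows "Re ((1+z)/(1-z)) = 0"
proof -
  have "(Re z)^2 + (Im z)^2 = 1" using assms(1) cmod_power2[of z] by simp
  then show ?thesis by (simp add: Re_divide power2_eq_square algebra_simps)
qed

lemma ZS_im:
  assumes "z \<in> ZS" "z \<noteq> 1"
  shows "0 \<le> Im ((1+z)/(1-z))"
proof -
  have "Im ((1+z)/(1-z)) = 2 * Im z / (cmod (1-z))^2"
    by (simp add: Im_divide algebra_simps cmod_power2)
  then show ?thesis using assms by (simp add: ZS_def)
qed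

lemma ZS_s:
  assumes "z \<in> ZS" "z \<noteq> 1"
  shows "(1+z)/(1-z) = \<i> * complex_of_real (Im ((1+z)/(1-z)))"
  using ZS_re[of z] assms by (simp add: ZS_def complex_eq_iff)

lemma ZS_ex:
  assumes "0 \<le> \<omega>"
  shows "\<exists>z\<in>ZS. z \<noteq> 1 \<and> (1+z)/(1-z) = \<i> * complex_of_real \<omega>"
proof -
  define s where "s = \<i> * complex_of_real \<omega>"
  have s1: "s + 1 \<noteq> 0" by (simp add: s_def complex_eq_iff)
  define z where "z = (s - 1)/(s + 1)"
  have "z \<noteq> 1" using s1 by (simp add: z_def field_simps)
  moreover have "(1+z)/(1-z) = s"
  proof -
    have e1: "1 + z = 2 * s / (s+1)" using s1 by (simp add: z_def field_simps)
    have e2: "1 - z = 2/(s+1)" using s1 by (simp add: z_def field_simps)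
    have "2 + s * 2 \<noteq> 0" using s1 by (simp add: complex_eq_iff)
    then show ?thesis unfolding e1 e2 using s1 by (simp add: field_simps)
  qed
  moreover have "cmod z = 1"
  proof -
    have "cmod (s - 1) = cmod (s + 1)"
      by (simp add: s_def cmod_def)
    then show ?thesis using s1 by (simp add: z_def norm_divide)
  qed
  moreover have "0 \<le> Im z"
  proof -
    have "Im z = 2 * \<omega> / (cmod (s+1))^2"
      by (simp add: z_def s_def Im_divide cmod_def power2_eq_square algebra_simps)
    then show ?thesis using assms by simp
  qed
  ultimately show ?thesis unfolding s_def ZS_def by auto
qed

lemma Cf_sat_coord:
  fixes W :: "(real^'m) set"
  assumes r: "r > 0"
  shows "Cf W K (\<lambda>x y. complex_of_real ((\<chi> i. x0$i + sat r (x$i - x0$i)) $ k))"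
proof (rule C1I[where d="\<lambda>x y. axis k (complex_of_real (sat' r (x$k - x0$k)))"])
  have cs: "continuous_on UNIV (sat r)"
    using sat_deriv[OF r] by (intro continuous_at_imp_continuous_on ballI DERIV_isCont) auto
  show "continuous_on (W \<times> K) (\<lambda>p. complex_of_real ((\<chi> i. x0$i + sat r (fst p $ i - x0$i)) $ k))"
    by (simp, intro continuous_on_of_real continuous_on_add continuous_on_const
        continuous_on_compose2[OF cs] continuous_on_diff continuous_on_component continuous_on_fst continuous_on_id) auto
  show "continuous_on (W \<times> K) (\<lambda>p. axis k (complex_of_real (sat' r (fst p $ k - x0$k))))"
    unfolding axis_def
  proof (intro continuous_on_vec_lambda)
    fix i
    have c: "continuous_on (W \<times> K) (\<lambda>p. complex_of_real (sat' r (fst p $ k - x0 $ k)))"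
      by (intro continuous_on_of_real continuous_on_compose2[OF sat'_cont[OF r]] continuous_on_diff
          continuous_on_component continuous_on_fst continuous_on_id continuous_on_const) auto
    show "continuous_on (W \<times> K) (\<lambda>x. if i = k then complex_of_real (sat' r (fst x $ k - x0 $ k)) else 0)"
      using c by (cases "i = k") simp_all
  qed
  fix x y
  have h1: "((\<lambda>x::real^'m. x$k - x0$k) has_derivative (\<lambda>h. h$k)) (at x)"
    by (intro has_derivative_diff[where g'="\<lambda>h. 0", simplified] has_derivative_const
        bounded_linear_imp_has_derivative bounded_linear_vec_nth)
  have h2: "(sat r has_derivative (\<lambda>u. sat' r (x$k - x0$k) * u)) (at (x$k - x0$k))"
    using sat_deriv[OF r] by (rule has_field_derivative_imp_has_derivative)
  have h3: "((\<lambda>x. sat r (x$k - x0$k)) has_derivative (\<lambda>h. sat' r (x$k - x0$k) * h$k)) (at x)"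
    using has_derivative_compose[OF h1 h2] by (simp add: o_def)
  have h4: "((\<lambda>x. complex_of_real (x0$k + sat r (x$k - x0$k))) has_derivative
      (\<lambda>h. complex_of_real (0 + sat' r (x$k - x0$k) * h$k))) (at x)"
    by (intro has_derivative_of_real has_derivative_add has_derivative_const h3)
  have eq: "(\<lambda>h. complex_of_real (0 + sat' r (x$k - x0$k) * h$k)) =
     (\<lambda>h. \<Sum>i\<in>UNIV. of_real (h$i) * axis k (complex_of_real (sat' r (x$k - x0$k))) $ i)"
  proof
    fix h :: "real^'m"
    have "(\<Sum>i\<in>UNIV. of_real (h$i) * axis k (complex_of_real (sat' r (x$k - x0$k))) $ i)
       = (\<Sum>i\<in>UNIV. if i = k then complex_of_real (h$i) * complex_of_real (sat' r (x$k - x0$k)) else 0)"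
      by (rule sum.cong) (auto simp: axis_def)
    also have "\<dots> = complex_of_real (h$k) * complex_of_real (sat' r (x$k - x0$k))" by (simp add: sum.delta')
    finally show "complex_of_real (0 + sat' r (x$k - x0$k) * h$k) =
        (\<Sum>i\<in>UNIV. of_real (h$i) * axis k (complex_of_real (sat' r (x$k - x0$k))) $ i)"
      by (simp add: mult.commute)
  qed
  show "((\<lambda>x. complex_of_real ((\<chi> i. x0$i + sat r (x$i - x0$i)) $ k)) has_derivative
      (\<lambda>h. \<Sum>i\<in>UNIV. of_real (h$i) * axis k (complex_of_real (sat' r (x$k - x0$k))) $ i)) (at x)"
    using h4 unfolding eq by simp
qed


lemma lowerC1_from_rep:
  fixes f :: "real^'n \<Rightarrow> real" and g :: "real^'n \<Rightarrow> 'k::topological_space \<Rightarrow> complex"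
    and emb :: "'k \<Rightarrow> nat \<Rightarrow> real" and dec :: "(nat \<Rightarrow> real) \<Rightarrow> 'k"
  assumes Cfg: "Cf UNIV K0 g" and K0: "compact K0"
    and emb: "continuous_on K0 emb" and dec: "continuous_on UNIV dec" and de: "\<And>p. p \<in> K0 \<Longrightarrow> dec (emb p) = p"
    and U: "open U" "x0 \<in> U"
    and rep: "\<And>x. x \<in> U \<Longrightarrow> (\<exists>p\<in>K0. Re (g x p) = f x) \<and> (\<forall>p\<in>K0. Re (g x p) \<le> f x)"
  shows "lower_C1_at f x0"
proof -
  obtain d where d: "continuous_on (UNIV \<times> K0) (\<lambda>p. d (fst p) (snd p))"
    "\<And>x y. x\<in>UNIV \<Longrightarrow> y\<in>K0 \<Longrightarrow> ((\<lambda>x. g x y) has_derivative (\<lambda>h. \<Sum>i\<in>UNIV. of_real (h$i) * d x y $ i)) (at x)"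
    by (rule C1E[OF Cfg]) blast
  define K where "K = emb ` K0"
  define F where "F x y = Re (g x (dec y))" for x y
  define dF where "dF x y = (\<chi> i. Re (d x (dec y) $ i))" for x y
  have cK: "compact K" unfolding K_def by (rule compact_continuous_image[OF emb K0])
  have decK: "dec y \<in> K0" if "y \<in> K" for y using that de by (auto simp: K_def)
  have map: "(\<lambda>q. (fst q, dec (snd q))) ` (UNIV \<times> K) \<subseteq> UNIV \<times> K0" using decK by auto
  have cmap: "continuous_on (UNIV \<times> K) (\<lambda>q. (fst q, dec (snd q)))"
    by (intro continuous_on_Pair continuous_on_fst continuous_on_id continuous_on_compose2[OF dec] continuous_on_snd) auto
  have cF: "continuous_on (UNIV \<times> K) (\<lambda>(x, y). F x y)"
  proof -
    have "continuous_on (UNIV \<times> K) (\<lambda>q. g (fst q) (dec (snd q)))"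
      using continuous_on_compose2[OF Cf_cont[OF Cfg] cmap map] by simp
    then show ?thesis unfolding F_def case_prod_unfold by (intro continuous_on_Re)
  qed
  have cdF: "continuous_on (UNIV \<times> K) (\<lambda>(x, y). dF x y)"
  proof -
    have "continuous_on (UNIV \<times> K) (\<lambda>q. d (fst q) (dec (snd q)))"
      using continuous_on_compose2[OF d(1) cmap map] by simp
    then show ?thesis unfolding dF_def case_prod_unfold
      by (intro continuous_on_vec_lambda continuous_on_Re continuous_on_component)
  qed
  have dFd: "((\<lambda>x'. F x' y) has_derivative (\<lambda>h. dF x y \<bullet> h)) (at x)" if "y \<in> K" for x y
  proof -
    have "((\<lambda>x'. Re (g x' (dec y))) has_derivative (\<lambda>h. Re (\<Sum>i\<in>UNIV. of_real (h$i) * d x (dec y) $ i))) (at x)"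
      using has_derivative_Re[OF d(2)[OF _ decK[OF that]]] by simp
    moreover have "(\<lambda>h. Re (\<Sum>i\<in>UNIV. of_real (h$i) * d x (dec y) $ i)) = (\<lambda>h. dF x y \<bullet> h)"
      by (simp add: dF_def inner_vec_def mult.commute)
    ultimately show ?thesis unfolding F_def by simp
  qed
  have repF: "\<forall>x\<in>U. (\<exists>y\<in>K. F x y = f x) \<and> (\<forall>y\<in>K. F x y \<le> f x)"
  proof
    fix x assume "x \<in> U"
    from rep[OF this] obtain p where p: "p \<in> K0" "Re (g x p) = f x" and le: "\<forall>p\<in>K0. Re (g x p) \<le> f x" by blast
    have "emb p \<in> K" "F x (emb p) = f x" using p de by (auto simp: K_def F_def)
    moreover have "\<forall>y\<in>K. F x y \<le> f x" using le de by (auto simp: K_def F_def)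
    ultimately show "(\<exists>y\<in>K. F x y = f x) \<and> (\<forall>y\<in>K. F x y \<le> f x)" by blast
  qed
  obtain e where e: "e > 0" "ball x0 e \<subseteq> U" using U open_contains_ball by blast
  have cc: "compact (cball x0 e \<times> K)" using cK by (intro compact_Times compact_cball)
  have "continuous_on (cball x0 e \<times> K) (\<lambda>(x, y). dF x y)" by (rule continuous_on_subset[OF cdF]) auto
  then have "compact ((\<lambda>(x, y). dF x y) ` (cball x0 e \<times> K))"
    using cc by (rule compact_continuous_image)
  then obtain B where B0: "B > 0" and Bb: "\<And>v. v \<in> (\<lambda>(x, y). dF x y) ` (cball x0 e \<times> K) \<Longrightarrow> norm v \<le> B"
    using compact_imp_bounded bounded_pos by metis
  have B: "norm (dF x y) \<le> B" if "x \<in> cball x0 e" "y \<in> K" for x y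
    using Bb[of "dF x y"] that by force
  have Fl: "F x y - F x' y \<le> B * dist x x'" if xx: "x \<in> ball x0 e" "x' \<in> ball x0 e" and y: "y \<in> K" for x x' y
  proof -
    have "norm (F x y - F x' y) \<le> B * norm (x - x')"
    proof (rule differentiable_bound[where f="\<lambda>x'. F x' y" and f'="\<lambda>z h. dF z y \<bullet> h" and S="ball x0 e"])
      show "convex (ball x0 e)" by simp
      show "((\<lambda>x'. F x' y) has_derivative (\<lambda>h. dF z y \<bullet> h)) (at z within ball x0 e)" if "z \<in> ball x0 e" for z
        using dFd[OF y] by (rule has_derivative_at_withinI)
      show "onorm (\<lambda>h. dF z y \<bullet> h) \<le> B" if z: "z \<in> ball x0 e" for z
      proof (rule onorm_le)
        fix h
        have "norm (dF z y \<bullet> h) \<le> norm (dF z y) * norm h" using Cauchy_Schwarz_ineq2 by simp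
        also have "\<dots> \<le> B * norm h" using B[of z y] z y by (intro mult_right_mono) auto
        finally show "norm (dF z y \<bullet> h) \<le> B * norm h" .
      qed
    qed (use xx in auto)
    then show ?thesis by (simp add: dist_norm)
  qed
  have fl: "f x - f x' \<le> B * dist x x'" if xx: "x \<in> ball x0 e" "x' \<in> ball x0 e" for x x'
  proof -
    have xU: "x \<in> U" "x' \<in> U" using xx e by auto
    obtain y where y: "y \<in> K" "F x y = f x" using repF xU(1) by blast
    have "F x' y \<le> f x'" using repF xU(2) y(1) by blast
    then show ?thesis using Fl[OF xx y(1)] y(2) by linarith
  qed
  have lip: "B-lipschitz_on (ball x0 e) f"
  proof (rule lipschitz_onI)
    fix x x' assume xx: "x \<in> ball x0 e" "x' \<in> ball x0 e"
    have "f x - f x' \<le> B * dist x x'" "f x' - f x \<le> B * dist x x'"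
      using fl[OF xx] fl[OF xx(2,1)] by (auto simp: dist_commute)
    then show "dist (f x) (f x') \<le> B * dist x x'" by (simp add: dist_real_def abs_le_iff)
  qed (use B0 in simp)
  show ?thesis
    unfolding lower_C1_at_def
  proof (intro conjI)
    show "\<exists>V L. open V \<and> x0 \<in> V \<and> L-lipschitz_on V f"
      using lip e(1) by (intro exI[of _ "ball x0 e"] exI[of _ B]) auto
    show "\<exists>(K :: (nat \<Rightarrow> real) set) U (F :: real^'n \<Rightarrow> (nat \<Rightarrow> real) \<Rightarrow> real)
        (dF :: real^'n \<Rightarrow> (nat \<Rightarrow> real) \<Rightarrow> real^'n).
        compact K \<and> open U \<and> x0 \<in> U \<and>
        continuous_on (UNIV \<times> K) (\<lambda>(x, y). F x y) \<and>
        continuous_on (UNIV \<times> K) (\<lambda>(x, y). dF x y) \<and>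
        (\<forall>x. \<forall>y\<in>K. ((\<lambda>x'. F x' y) has_derivative (\<lambda>h. dF x y \<bullet> h)) (at x)) \<and>
        (\<forall>x\<in>U. (\<exists>y\<in>K. F x y = f x) \<and> (\<forall>y\<in>K. F x y \<le> f x))"
      using cK U cF cdF dFd repF by (intro exI[of _ K] exI[of _ U] exI[of _ F] exI[of _ dF]) blast
  qed
qed

definition dec :: "(nat \<Rightarrow> real) \<Rightarrow> complex \<times> (complex^'z::finite) \<times> (complex^'w::finite)" where
  "dec y = (Complex (y 4) (y 5),
            \<chi> i. Complex (y (6 * to_nat i)) (y (6 * to_nat i + 1)),
            \<chi> i. Complex (y (6 * to_nat i + 2)) (y (6 * to_nat i + 3)))"

definition emb :: "complex \<times> (complex^'z::finite) \<times> (complex^'w::finite) \<Rightarrow> nat \<Rightarrow> real" where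
  "emb p n = (if n mod 6 = 0 then Re (fst (snd p) $ from_nat (n div 6))
      else if n mod 6 = 1 then Im (fst (snd p) $ from_nat (n div 6))
      else if n mod 6 = 2 then Re (snd (snd p) $ from_nat (n div 6))
      else if n mod 6 = 3 then Im (snd (snd p) $ from_nat (n div 6))
      else if n mod 6 = 4 then Re (fst p) else Im (fst p))"

lemma dec_emb:
  fixes p :: "complex \<times> (complex^'z::finite) \<times> (complex^'w::finite)"
  shows "dec (emb p) = p"
proof -
  obtain z u v where p: "p = (z, u, v)" by (cases p) auto
  have h0: "Suc (6 * k) mod 6 = 1" for k :: nat
  proof -
    have b: "Suc (6 * k) = 1 + 6 * k" by simp
    have a: "(1 + 6 * k) mod 6 = 1 mod (6::nat)" by (rule mod_mult_self2)
    show ?thesis unfolding b a by simp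
  qed
  have h1: "Suc (6 * k) div 6 = k" for k :: nat
  proof -
    have b: "Suc (6 * k) = 1 + 6 * k" by simp
    have a: "(1 + 6 * k) div 6 = k + 1 div (6::nat)" by (rule div_mult_self2) simp
    show ?thesis unfolding b a by simp
  qed
  have h2: "Suc (Suc (6 * k)) mod 6 = 2" for k :: nat
  proof -
    have b: "Suc (Suc (6 * k)) = 2 + 6 * k" by simp
    have a: "(2 + 6 * k) mod 6 = 2 mod (6::nat)" by (rule mod_mult_self2)
    show ?thesis unfolding b a by simp
  qed
  have h3: "Suc (Suc (6 * k)) div 6 = k" for k :: nat
  proof -
    have b: "Suc (Suc (6 * k)) = 2 + 6 * k" by simp
    have a: "(2 + 6 * k) div 6 = k + 2 div (6::nat)" by (rule div_mult_self2) simp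
    show ?thesis unfolding b a by simp
  qed
  have h4: "Suc (Suc (Suc (6 * k))) mod 6 = 3" for k :: nat
  proof -
    have b: "Suc (Suc (Suc (6 * k))) = 3 + 6 * k" by simp
    have a: "(3 + 6 * k) mod 6 = 3 mod (6::nat)" by (rule mod_mult_self2)
    show ?thesis unfolding b a by simp
  qed
  have h5: "Suc (Suc (Suc (6 * k))) div 6 = k" for k :: nat
  proof -
    have b: "Suc (Suc (Suc (6 * k))) = 3 + 6 * k" by simp
    have a: "(3 + 6 * k) div 6 = k + 3 div (6::nat)" by (rule div_mult_self2) simp
    show ?thesis unfolding b a by simp
  qed
  have h6: "(6 * k) mod 6 = 0" "(6 * k) div 6 = k" for k :: nat by simp_all
  show ?thesis by (simp add: dec_def emb_def p vec_eq_iff h0 h1 h2 h3 h4 h5 h6)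
qed

lemma cont_dec: "continuous_on UNIV (dec :: (nat \<Rightarrow> real) \<Rightarrow> complex \<times> (complex^'z::finite) \<times> (complex^'w::finite))"
proof -
  have cc: "continuous_on UNIV (\<lambda>y::nat \<Rightarrow> real. Complex (y a) (y b))" for a b
    unfolding Complex_eq
    by (intro continuous_on_add continuous_on_mult continuous_on_const continuous_on_of_real
        continuous_on_product_coordinates)
  show ?thesis unfolding dec_def
    by (intro continuous_on_Pair continuous_on_vec_lambda cc)
qed

lemma cont_emb: "continuous_on S (emb :: complex \<times> (complex^'z::finite) \<times> (complex^'w::finite) \<Rightarrow> nat \<Rightarrow> real)"
proof (rule continuous_on_coordinatewise_then_product)
  fix n :: nat
  have c1: "continuous_on S (\<lambda>p::complex \<times> (complex^'z) \<times> (complex^'w). fst (snd p) $ i)" for i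
    by (intro continuous_on_component continuous_on_fst continuous_on_snd continuous_on_id)
  have c2: "continuous_on S (\<lambda>p::complex \<times> (complex^'z) \<times> (complex^'w). snd (snd p) $ i)" for i
    by (intro continuous_on_component continuous_on_snd continuous_on_id)
  have c0: "continuous_on S (\<lambda>p::complex \<times> (complex^'z) \<times> (complex^'w). fst p)"
    by (intro continuous_on_fst continuous_on_id)
  have "n mod 6 < 6" by simp
  then have "n mod 6 = 0 \<or> n mod 6 = 1 \<or> n mod 6 = 2 \<or> n mod 6 = 3 \<or> n mod 6 = 4 \<or> n mod 6 = 5"
    by linarith
  then consider "n mod 6 = 0" | "n mod 6 = 1" | "n mod 6 = 2" | "n mod 6 = 3" | "n mod 6 = 4" | "n mod 6 = 5" by metis
  then show "continuous_on S (\<lambda>p. emb p n)"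
    by cases (simp_all add: emb_def continuous_on_Re[OF c0] continuous_on_Im[OF c0]
        continuous_on_Re[OF c1] continuous_on_Im[OF c1] continuous_on_Re[OF c2] continuous_on_Im[OF c2])
qed

definition smat :: "'a::times \<Rightarrow> 'a^'n^'m \<Rightarrow> 'a^'n^'m" where
  "smat c X = (\<chi> i j. c * X$i$j)"

lemma smat_mult_left: "smat (a::complex) X ** Y = smat a (X ** Y)"
  by (simp add: smat_def vec_eq_iff matrix_matrix_mult_def sum_distrib_left mult.assoc)
lemma smat_mult_right: "X ** smat (a::complex) Y = smat a (X ** Y)"
  by (simp add: smat_def vec_eq_iff matrix_matrix_mult_def sum_distrib_left mult_ac)
lemma smat_smat: "smat (a::complex) (smat b X) = smat (a*b) X"
  by (simp add: smat_def vec_eq_iff mult.assoc)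
lemma smat_1: "smat (1::complex) X = X"
  by (simp add: smat_def vec_eq_iff)
lemma smat_0: "smat (0::complex) X = 0"
  by (simp add: smat_def vec_eq_iff)
lemma smat_inv:
  fixes X :: "complex^'n^'n"
  assumes "a \<noteq> 0" "invertible X"
  shows "matrix_inv (smat a X) = smat (inverse a) (matrix_inv X)"
  by (rule matrix_inv_unique)
    (simp_all add: smat_mult_left smat_mult_right smat_smat matrix_inv_works[OF assms(2)] assms(1) smat_1)
lemma smat_mv: "smat (a::complex) X *v v = a *s (X *v v)"
  by (simp add: smat_def vec_eq_iff matrix_vector_mult_def sum_distrib_left mult.assoc)
lemma mat_mv: "mat (c::complex) *v v = c *s v"
proof -
  have "(\<Sum>j\<in>UNIV. (if i = j then c else 0) * v$j) = c * v$i" for i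
  proof -
    have "(\<Sum>j\<in>UNIV. (if i = j then c else 0) * v$j) = (\<Sum>j\<in>UNIV. if i = j then c * v$j else 0)"
      by (rule sum.cong) auto
    then show ?thesis by simp
  qed
  then show ?thesis by (simp add: vec_eq_iff matrix_vector_mult_def mat_def)
qed

lemma CfM_smat: "Cf V K c \<Longrightarrow> CfM V K A \<Longrightarrow> CfM V K (\<lambda>x y. smat (c x y) (A x y))"
  unfolding smat_def by (rule CfM_scal)

lemma CfM_mat:
  assumes "continuous_on K c"
  shows "CfM V K (\<lambda>x y. mat (c y))"
  unfolding CfM_def
proof (intro allI)
  fix i j
  show "Cf V K (\<lambda>x y. mat (c y) $ i $ j)"
    by (cases "i = j") (auto simp: mat_def intro: Cf_const[OF assms] Cf_constc)
qed

lemma cmat_add: "cmat (X + Y) = cmat X + cmat Y"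
  by (simp add: cmat_def vec_eq_iff)
lemma cmat_diff: "cmat (X - Y) = cmat X - cmat Y"
  by (simp add: cmat_def vec_eq_iff)
lemma cmat_mult: "cmat (X ** Y) = cmat X ** cmat Y"
  by (simp add: cmat_def vec_eq_iff matrix_matrix_mult_def)
lemma cmat_mat: "cmat (mat c) = mat (complex_of_real c)"
  by (simp add: cmat_def vec_eq_iff mat_def)
lemma cmat_inv:
  assumes "invertible X"
  shows "cmat (matrix_inv X) = matrix_inv (cmat X)"
proof -
  have "cmat X ** cmat (matrix_inv X) = mat 1" "cmat (matrix_inv X) ** cmat X = mat 1"
    using matrix_inv_works[OF assms] by (simp_all add: cmat_mult[symmetric] cmat_mat)
  then show ?thesis by (simp add: matrix_inv_unique)
qed
lemma cmat_invertible: "invertible X \<Longrightarrow> invertible (cmat X)"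
  using matrix_inv_works[of X] unfolding invertible_def
  by (metis cmat_mult cmat_mat of_real_1)

context
  fixes A :: "real^'x^'x" and B1 :: "real^'r^'x" and B2 :: "real^'w^'x"
    and C1 :: "real^'x^'r" and C2 :: "real^'x^'z"
    and D11 :: "real^'r^'r" and D12 :: "real^'w^'r"
    and D21 :: "real^'r^'z" and D22 :: "real^'w^'z"
    and blk :: "'r \<Rightarrow> 'm::finite"
begin

definition "DC \<delta> = cmat (Delta blk \<delta>)"
definition "NC \<delta> = mat 1 - cmat D11 ** DC \<delta>"
definition "PC \<delta> = DC \<delta> ** matrix_inv (NC \<delta>)"
definition "AC \<delta> = cmat A + cmat B1 ** PC \<delta> ** cmat C1"
definition "BC \<delta> = cmat B2 + cmat B1 ** PC \<delta> ** cmat D12"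
definition "CC \<delta> = cmat C2 + cmat D21 ** PC \<delta> ** cmat C1"
definition "DDC \<delta> = cmat D22 + cmat D21 ** PC \<delta> ** cmat D12"
definition "LZ z \<delta> = mat (1+z) - smat (1-z) (AC \<delta>)"
definition "GZ \<delta> z = smat (1-z) (CC \<delta> ** matrix_inv (LZ z \<delta>) ** BC \<delta>) + DDC \<delta>"
definition "FZ \<delta> (p :: complex \<times> (complex^'z) \<times> (complex^'w)) =
   (\<Sum>i\<in>UNIV. cnj (fst (snd p) $ i) * (GZ \<delta> (fst p) *v snd (snd p)) $ i)"

lemma CfM_NC:
  fixes \<phi> :: "real^'n \<Rightarrow> real^'m" and K :: "'k::topological_space set"
  assumes coord: "\<And>k. Cf W K (\<lambda>x p. complex_of_real (\<phi> x $ k))"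
  shows "CfM W K (\<lambda>x p. NC (\<phi> x))"
proof -
  have DC: "CfM W K (\<lambda>x p. DC (\<phi> x))"
    unfolding CfM_def
  proof (intro allI)
    fix i j
    show "Cf W K (\<lambda>x p. DC (\<phi> x) $ i $ j)"
      by (cases "i = j") (auto simp: DC_def cmat_def Delta_def intro: coord Cf_constc)
  qed
  show ?thesis
    unfolding NC_def by (intro CfM_diff CfM_constc CfM_mult DC)
qed

lemma Cf_detLZ:
  fixes \<phi> :: "real^'n \<Rightarrow> real^'m" and K :: "(complex \<times> 'k::topological_space) set"
  assumes coord: "\<And>k. Cf W K (\<lambda>x p. complex_of_real (\<phi> x $ k))" and W: "open W"
    and detN: "\<And>x. x \<in> W \<Longrightarrow> det (NC (\<phi> x)) \<noteq> 0"
  shows "Cf W K (\<lambda>x p. det (LZ (fst p) (\<phi> x)))"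
proof -
  have DC: "CfM W K (\<lambda>x p. DC (\<phi> x))"
    unfolding CfM_def
  proof (intro allI)
    fix i j
    show "Cf W K (\<lambda>x p. DC (\<phi> x) $ i $ j)"
      by (cases "i = j") (auto simp: DC_def cmat_def Delta_def intro: coord Cf_constc)
  qed
  have NC: "CfM W K (\<lambda>x p. NC (\<phi> x))"
    unfolding NC_def by (intro CfM_diff CfM_constc CfM_mult DC)
  have PC: "CfM W K (\<lambda>x p. PC (\<phi> x))"
    unfolding PC_def by (intro CfM_mult DC CfM_inv NC detN W)
  have AC: "CfM W K (\<lambda>x p. AC (\<phi> x))"
    unfolding AC_def by (intro CfM_add CfM_mult CfM_constc PC)
  have c1: "continuous_on K (\<lambda>p. 1 + fst p)" "continuous_on K (\<lambda>p. 1 - fst p)"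
    by (intro continuous_on_add continuous_on_diff continuous_on_const continuous_on_fst continuous_on_id)+
  have LZ: "CfM W K (\<lambda>x p. LZ (fst p) (\<phi> x))"
    unfolding LZ_def by (intro CfM_diff CfM_mat CfM_smat Cf_const c1 AC)
  then show ?thesis by (rule Cf_det)
qed

lemma det_cmat: "det (cmat X) = complex_of_real (det X)"
  by (simp add: det_def cmat_def)

lemma NC_wp: "det (NC \<delta>) \<noteq> 0 \<Longrightarrow> well_posed D11 blk \<delta>"
proof -
  assume "det (NC \<delta>) \<noteq> 0"
  moreover have "NC \<delta> = cmat (mat 1 - D11 ** Delta blk \<delta>)"
    by (simp add: NC_def DC_def cmat_diff cmat_mult cmat_mat)
  ultimately have "det (mat 1 - D11 ** Delta blk \<delta>) \<noteq> 0" by (simp add: det_cmat)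
  then show ?thesis unfolding well_posed_def using invertible_det_nz by blast
qed

lemma Cf_FZ:
  fixes \<phi> :: "real^'n \<Rightarrow> real^'m" and K :: "(complex \<times> (complex^'z) \<times> (complex^'w)) set"
  assumes coord: "\<And>k. Cf W K (\<lambda>x p. complex_of_real (\<phi> x $ k))" and W: "open W"
    and detN: "\<And>x. x \<in> W \<Longrightarrow> det (NC (\<phi> x)) \<noteq> 0"
    and detL: "\<And>x p. x \<in> W \<Longrightarrow> p \<in> K \<Longrightarrow> det (LZ (fst p) (\<phi> x)) \<noteq> 0"
  shows "Cf W K (\<lambda>x p. FZ (\<phi> x) p)"
proof -
  have DC: "CfM W K (\<lambda>x p. DC (\<phi> x))"
    unfolding CfM_def
  proof (intro allI)
    fix i j
    show "Cf W K (\<lambda>x p. DC (\<phi> x) $ i $ j)"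
      by (cases "i = j") (auto simp: DC_def cmat_def Delta_def intro: coord Cf_constc)
  qed
  have NC: "CfM W K (\<lambda>x p. NC (\<phi> x))"
    unfolding NC_def by (intro CfM_diff CfM_constc CfM_mult DC)
  have PC: "CfM W K (\<lambda>x p. PC (\<phi> x))"
    unfolding PC_def by (intro CfM_mult DC CfM_inv NC detN W)
  have AC: "CfM W K (\<lambda>x p. AC (\<phi> x))"
    unfolding AC_def by (intro CfM_add CfM_mult CfM_constc PC)
  have BC: "CfM W K (\<lambda>x p. BC (\<phi> x))"
    unfolding BC_def by (intro CfM_add CfM_mult CfM_constc PC)
  have CC: "CfM W K (\<lambda>x p. CC (\<phi> x))"
    unfolding CC_def by (intro CfM_add CfM_mult CfM_constc PC)
  have DDC: "CfM W K (\<lambda>x p. DDC (\<phi> x))"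
    unfolding DDC_def by (intro CfM_add CfM_mult CfM_constc PC)
  have c1: "continuous_on K (\<lambda>p. 1 + fst p)" "continuous_on K (\<lambda>p. 1 - fst p)"
    by (intro continuous_on_add continuous_on_diff continuous_on_const continuous_on_fst continuous_on_id)+
  have LZ: "CfM W K (\<lambda>x p. LZ (fst p) (\<phi> x))"
    unfolding LZ_def by (intro CfM_diff CfM_mat CfM_smat Cf_const c1 AC)
  have GZ: "CfM W K (\<lambda>x p. GZ (\<phi> x) (fst p))"
    unfolding GZ_def by (intro CfM_add CfM_smat Cf_const c1 CfM_mult CfM_inv CC BC LZ W detL DDC)
  have cu: "continuous_on K (\<lambda>p. cnj (fst (snd p) $ i))" for i
    by (intro continuous_on_cnj continuous_on_component continuous_on_fst continuous_on_snd continuous_on_id)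
  have cv: "continuous_on K (\<lambda>p. snd (snd p) $ i)" for i
    by (intro continuous_on_component continuous_on_snd continuous_on_id)
  have inner: "Cf W K (\<lambda>x p. \<Sum>j\<in>UNIV. GZ (\<phi> x) (fst p) $ i $ j * snd (snd p) $ j)" for i
    by (rule Cf_sum) (auto intro!: Cf_mult CfM_entry[OF GZ] Cf_const cv)
  show ?thesis
    unfolding FZ_def matrix_vector_mult_def vec_lambda_beta
    by (rule Cf_sum) (auto intro!: Cf_mult Cf_const cu inner)
qed


lemma wp_facts:
  assumes "well_posed D11 blk \<delta>"
  shows "det (NC \<delta>) \<noteq> 0" "AC \<delta> = cmat (Acl A B1 C1 D11 blk \<delta>)"
    "BC \<delta> = cmat (Bcl B2 B1 D12 D11 blk \<delta>)" "CC \<delta> = cmat (Ccl C2 D21 C1 D11 blk \<delta>)"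
    "DDC \<delta> = cmat (Dcl D22 D21 D12 D11 blk \<delta>)"
proof -
  have inv: "invertible (mat 1 - D11 ** Delta blk \<delta>)" using assms by (simp add: well_posed_def)
  have N: "NC \<delta> = cmat (mat 1 - D11 ** Delta blk \<delta>)"
    by (simp add: NC_def DC_def cmat_diff cmat_mult cmat_mat)
  show "det (NC \<delta>) \<noteq> 0" unfolding N using cmat_invertible[OF inv] invertible_det_nz by blast
  have P: "PC \<delta> = cmat (Phi D11 blk \<delta>)"
    by (simp add: PC_def Phi_def N DC_def cmat_mult cmat_inv[OF inv])
  show "AC \<delta> = cmat (Acl A B1 C1 D11 blk \<delta>)" by (simp add: AC_def Acl_def P cmat_add cmat_mult)
  show "BC \<delta> = cmat (Bcl B2 B1 D12 D11 blk \<delta>)" by (simp add: BC_def Bcl_def P cmat_add cmat_mult)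
  show "CC \<delta> = cmat (Ccl C2 D21 C1 D11 blk \<delta>)" by (simp add: CC_def Ccl_def P cmat_add cmat_mult)
  show "DDC \<delta> = cmat (Dcl D22 D21 D12 D11 blk \<delta>)" by (simp add: DDC_def Dcl_def P cmat_add cmat_mult)
qed

lemma GZ_1: "GZ \<delta> 1 = DDC \<delta>"
  by (simp add: GZ_def smat_0)

lemma GZ_tf:
  assumes wp: "well_posed D11 blk \<delta>" and z: "z \<noteq> 1" and dL: "det (LZ z \<delta>) \<noteq> 0"
  shows "GZ \<delta> z = tf (Acl A B1 C1 D11 blk \<delta>) (Bcl B2 B1 D12 D11 blk \<delta>) (Ccl C2 D21 C1 D11 blk \<delta>)
            (Dcl D22 D21 D12 D11 blk \<delta>) ((1+z)/(1-z))"
proof -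
  define s where "s = (1+z)/(1-z)"
  have z1: "1 - z \<noteq> 0" using z by simp
  define X where "X = mat s - AC \<delta>"
  have L: "LZ z \<delta> = smat (1-z) X"
    using z1 by (simp add: LZ_def X_def smat_def vec_eq_iff mat_def s_def field_simps)
  have invL: "invertible (LZ z \<delta>)" using dL invertible_det_nz by blast
  have XL: "X = smat (inverse (1-z)) (LZ z \<delta>)"
    using z1 by (simp add: L smat_smat smat_1)
  have invX: "invertible X"
  proof -
    have "X ** smat (1-z) (matrix_inv (LZ z \<delta>)) = mat 1" "smat (1-z) (matrix_inv (LZ z \<delta>)) ** X = mat 1"
      unfolding XL using z1 by (simp_all add: smat_mult_left smat_mult_right smat_smat matrix_inv_works[OF invL] smat_1)
    then show ?thesis unfolding invertible_def by blast
  qed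
  have "matrix_inv (LZ z \<delta>) = smat (inverse (1-z)) (matrix_inv X)"
    unfolding L using z1 invX by (rule smat_inv)
  then have "GZ \<delta> z = CC \<delta> ** matrix_inv X ** BC \<delta> + DDC \<delta>"
    using z1 by (simp add: GZ_def smat_mult_left smat_mult_right smat_smat smat_1)
  then show ?thesis
    by (simp add: tf_def X_def s_def wp_facts[OF wp])
qed

lemma hplus_rep:
  assumes wp: "well_posed D11 blk \<delta>" and dL: "\<And>z. z \<in> ZS \<Longrightarrow> det (LZ z \<delta>) \<noteq> 0"
    and cont: "continuous_on (ZS \<times> sphere 0 1 \<times> sphere 0 1) (FZ \<delta>)"
  shows "(\<exists>p\<in>ZS \<times> sphere 0 1 \<times> sphere 0 1. Re (FZ \<delta> p) = hplus A B1 B2 C1 C2 D11 D12 D21 D22 blk \<delta>)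
       \<and> (\<forall>p\<in>ZS \<times> sphere 0 1 \<times> sphere 0 1. Re (FZ \<delta> p) \<le> hplus A B1 B2 C1 C2 D11 D12 D21 D22 blk \<delta>)"
proof -
  let ?K = "ZS \<times> sphere (0::complex^'z) 1 \<times> sphere (0::complex^'w) 1"
  let ?Acl = "Acl A B1 C1 D11 blk \<delta>" and ?Bcl = "Bcl B2 B1 D12 D11 blk \<delta>"
  let ?Ccl = "Ccl C2 D21 C1 D11 blk \<delta>" and ?Dcl = "Dcl D22 D21 D12 D11 blk \<delta>"
  define \<sigma> where "\<sigma> z = sigma_max (GZ \<delta> z)" for z
  define S where "S = (\<lambda>\<omega>. sigma_max (tf ?Acl ?Bcl ?Ccl ?Dcl (\<i> * complex_of_real \<omega>))) ` {0..} \<union> {sigma_max (cmat ?Dcl)}"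
  have hp: "hplus A B1 B2 C1 C2 D11 D12 D21 D22 blk \<delta> = Sup S"
    by (simp add: hplus_def hinf_norm_def S_def)
  have FZle: "Re (FZ \<delta> p) \<le> \<sigma> (fst p)" if "p \<in> ?K" for p
    using that unfolding FZ_def \<sigma>_def by (intro sv_le) auto
  have S_eq: "S = \<sigma> ` ZS"
  proof
    show "S \<subseteq> \<sigma> ` ZS"
    proof
      fix t assume "t \<in> S"
      then consider \<omega> where "\<omega> \<ge> 0" "t = sigma_max (tf ?Acl ?Bcl ?Ccl ?Dcl (\<i> * complex_of_real \<omega>))"
        | "t = sigma_max (cmat ?Dcl)" unfolding S_def by auto
      then show "t \<in> \<sigma> ` ZS"
      proof cases
        case 1
        obtain z where z: "z \<in> ZS" "z \<noteq> 1" "(1+z)/(1-z) = \<i> * complex_of_real \<omega>"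
          using ZS_ex[OF 1(1)] by blast
        have "t = \<sigma> z" using 1(2) GZ_tf[OF wp z(2) dL[OF z(1)]] z(3) by (simp add: \<sigma>_def)
        then show ?thesis using z(1) by blast
      next
        case 2
        then have "t = \<sigma> 1" by (simp add: \<sigma>_def GZ_1 wp_facts[OF wp])
        then show ?thesis using one_ZS by blast
      qed
    qed
    show "\<sigma> ` ZS \<subseteq> S"
    proof
      fix t assume "t \<in> \<sigma> ` ZS"
      then obtain z where z: "z \<in> ZS" "t = \<sigma> z" by blast
      show "t \<in> S"
      proof (cases "z = 1")
        case True
        then show ?thesis using z by (simp add: \<sigma>_def GZ_1 wp_facts[OF wp] S_def)
      next
        case False
        have "t = sigma_max (tf ?Acl ?Bcl ?Ccl ?Dcl (\<i> * complex_of_real (Im ((1+z)/(1-z)))))"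
          using z GZ_tf[OF wp False dL[OF z(1)]] ZS_s[OF z(1) False] by (simp add: \<sigma>_def)
        then show ?thesis using ZS_im[OF z(1) False] unfolding S_def by auto
      qed
    qed
  qed
  have cK: "compact ?K" by (intro compact_Times compact_ZS compact_sphere)
  have neK: "?K \<noteq> {}" using one_ZS by (simp add: ex_in_conv[symmetric]) blast
  obtain p0 where p0: "p0 \<in> ?K" and p0max: "\<And>p. p \<in> ?K \<Longrightarrow> Re (FZ \<delta> p) \<le> Re (FZ \<delta> p0)"
    using continuous_attains_sup[OF cK neK continuous_on_Re[OF cont]] by blast
  define m where "m = Re (FZ \<delta> p0)"
  have sig_le: "\<sigma> z \<le> m" if "z \<in> ZS" for z
  proof -
    obtain u v where uv: "norm u = 1" "norm v = 1"
      "Re (\<Sum>i\<in>UNIV. cnj (u$i) * (GZ \<delta> z *v v)$i) = \<sigma> z"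
      using sv_attained[of "GZ \<delta> z"] unfolding \<sigma>_def by blast
    have "(z, u, v) \<in> ?K" using that uv by simp
    from p0max[OF this] show ?thesis using uv(3) by (simp add: m_def FZ_def)
  qed
  have "m \<le> \<sigma> (fst p0)" using FZle[OF p0] by (simp add: m_def)
  moreover have "fst p0 \<in> ZS" using p0 by auto
  ultimately have m_eq: "m = \<sigma> (fst p0)" using sig_le by (simp add: order.antisym)
  have "Sup S = m"
    unfolding S_eq by (rule cSup_eq_maximum) (use m_eq \<open>fst p0 \<in> ZS\<close> sig_le in auto)
  then show ?thesis using p0 p0max unfolding hp m_def by auto
qed

lemma stab_LZ:
  assumes "\<delta> \<in> stab_set A B1 C1 D11 blk" "z \<in> ZS"
  shows "det (LZ z \<delta>) \<noteq> 0"
proof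
  assume d0: "det (LZ z \<delta>) = 0"
  have wp: "well_posed D11 blk \<delta>" and hw: "hurwitz (Acl A B1 C1 D11 blk \<delta>)"
    using assms(1) by (auto simp: stab_set_def)
  have "\<not> (\<exists>B. B ** LZ z \<delta> = mat 1)"
    using d0 invertible_det_nz invertible_left_inverse by blast
  then obtain v where v: "LZ z \<delta> *v v = 0" "v \<noteq> 0"
    unfolding matrix_left_invertible_ker by blast
  have eq: "(1+z) *s v = (1-z) *s (AC \<delta> *v v)"
    using v(1) by (simp add: LZ_def matrix_vector_mult_diff_rdistrib mat_mv smat_mv)
  show False
  proof (cases "z = 1")
    case True
    then have "2 *s v = 0" using eq by simp
    then have "v = 0" by (simp add: vec_eq_iff)
    then show False using v(2) by simp
  next
    case False
    define s where "s = (1+z)/(1-z)"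
    have z1: "1 - z \<noteq> 0" using False by simp
    have "AC \<delta> *v v = s *s v"
    proof (subst vec_eq_iff, intro allI)
      fix i
      have "((1+z) *s v) $ i = ((1-z) *s (AC \<delta> *v v)) $ i" using eq by simp
      then have "(1+z) * v$i = (1-z) * (AC \<delta> *v v)$i" by (simp only: vector_smult_component)
      then show "(AC \<delta> *v v) $ i = (s *s v) $ i" using z1 by (simp add: s_def field_simps)
    qed
    then have "Re s < 0" using hw v(2) unfolding hurwitz_def wp_facts[OF wp] by blast
    moreover have "Re s = 0" using assms(2) False ZS_re unfolding s_def ZS_def by blast
    ultimately show False by simp
  qed
qed


lemma main_lemma:
  assumes x0: "x0 \<in> stab_set A B1 C1 D11 blk"
  shows "lower_C1_at (hplus A B1 B2 C1 C2 D11 D12 D21 D22 blk) x0"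
proof -
  define K0 where "K0 = ZS \<times> sphere (0::complex^'z) 1 \<times> sphere (0::complex^'w) 1"
  have cK0: "compact K0" unfolding K0_def by (intro compact_Times compact_ZS compact_sphere)
  have wp0: "well_posed D11 blk x0" using x0 by (simp add: stab_set_def)
  have detN0: "det (NC x0) \<noteq> 0" by (rule wp_facts(1)[OF wp0])
  have detL0: "det (LZ z x0) \<noteq> 0" if "z \<in> ZS" for z by (rule stab_LZ[OF x0 that])
  have "sphere (0::complex^'z) 1 \<noteq> {}" by simp
  then obtain u1 :: "complex^'z" where u1: "u1 \<in> sphere 0 1" by blast
  have "sphere (0::complex^'w) 1 \<noteq> {}" by simp
  then obtain v1 :: "complex^'w" where v1: "v1 \<in> sphere 0 1" by blast
  have cN: "continuous_on (UNIV \<times> (UNIV::real set)) (\<lambda>q. det (NC (fst q)))"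
    using Cf_cont[OF Cf_det[OF CfM_NC[where \<phi>="\<lambda>x. x" and W=UNIV and K="UNIV::real set", OF Cf_coord]]] by simp
  have cN': "continuous_on UNIV (\<lambda>x. det (NC x))"
    using continuous_on_compose2[OF cN, of UNIV "\<lambda>x. (x, 0::real)"] by (simp add: continuous_on_Pair continuous_on_id continuous_on_const)
  define W1 where "W1 = {x. det (NC x) \<noteq> 0}"
  have oW1: "open W1" unfolding W1_def by (rule open_Collect_neq[OF cN' continuous_on_const])
  have cL: "continuous_on (W1 \<times> (UNIV::(complex \<times> (complex^'z) \<times> (complex^'w)) set))
      (\<lambda>q. det (LZ (fst (snd q)) (fst q)))"
    using Cf_cont[OF Cf_detLZ[where \<phi>="\<lambda>x. x" and W=W1 and K="UNIV::(complex \<times> (complex^'z) \<times> (complex^'w)) set",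
          OF Cf_coord oW1]] by (simp add: W1_def)
  define O2 where "O2 = (W1 \<times> (UNIV::(complex \<times> (complex^'z) \<times> (complex^'w)) set)) \<inter>
      (\<lambda>q. det (LZ (fst (snd q)) (fst q))) -` (UNIV - {0})"
  have oO2: "open O2" unfolding O2_def
    by (rule continuous_open_preimage[OF cL]) (auto intro: open_Times oW1)
  have sub: "{x0} \<times> K0 \<subseteq> O2"
    using detN0 detL0 by (auto simp: O2_def W1_def K0_def)
  obtain X0 where X0: "x0 \<in> X0" "open X0" "X0 \<times> K0 \<subseteq> O2"
    using Elementary_Topology.tube_lemma[OF cK0 oO2 sub] by blast
  have goodX: "det (NC x) \<noteq> 0 \<and> (\<forall>z\<in>ZS. det (LZ z x) \<noteq> 0)" if "x \<in> X0" for x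
  proof -
    have "(x, 1, u1, v1) \<in> O2" using X0(3) that one_ZS u1 v1 by (auto simp: K0_def)
    then have "det (NC x) \<noteq> 0" by (simp add: O2_def W1_def)
    moreover have "det (LZ z x) \<noteq> 0" if "z \<in> ZS" for z
    proof -
      have "(x, z, u1, v1) \<in> O2" using X0(3) \<open>x \<in> X0\<close> that u1 v1 by (auto simp: K0_def)
      then show ?thesis by (simp add: O2_def)
    qed
    ultimately show ?thesis by blast
  qed
  obtain e where e: "e > 0" "ball x0 e \<subseteq> X0" using X0(1,2) open_contains_ball by blast
  define r where "r = e / (4 * real CARD('m))"
  have r0: "r > 0" using e(1) by (simp add: r_def)
  have c1: "real CARD('m) \<ge> 1" using finite_UNIV_card_ge_0[where 'a='m] by simp
  have c4: "1 \<le> real CARD('m) * 4" using c1 by linarith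
  have re: "r \<le> e" using e(1) c4 by (simp add: r_def field_simps)
  define \<psi> where "\<psi> x = (\<chi> i. x0$i + sat r (x$i - x0$i))" for x :: "real^'m"
  have \<psi>_in: "\<psi> x \<in> X0" for x
  proof -
    have "norm (\<psi> x - x0) \<le> (\<Sum>i\<in>UNIV. \<bar>(\<psi> x - x0)$i\<bar>)" by (rule norm_le_l1_cart)
    also have "\<dots> \<le> of_nat (card (UNIV::'m set)) * (2*r)"
      by (rule sum_bounded_above) (simp add: \<psi>_def sat_bound[OF r0])
    also have "\<dots> = e / 2" using e(1) by (simp add: r_def)
    finally have "\<psi> x \<in> ball x0 e" using e(1) by (simp add: dist_norm norm_minus_commute)
    then show ?thesis using e(2) by blast
  qed
  have \<psi>_id: "\<psi> x = x" if "x \<in> ball x0 r" for x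
  proof -
    have "\<bar>x$i - x0$i\<bar> \<le> r" for i
    proof -
      have "\<bar>(x - x0)$i\<bar> \<le> norm (x - x0)" by (rule component_le_norm_cart)
      then show ?thesis using that by (simp add: dist_norm norm_minus_commute)
    qed
    then show ?thesis by (simp add: \<psi>_def sat_id vec_eq_iff)
  qed
  have Cfg: "Cf UNIV K0 (\<lambda>x p. FZ (\<psi> x) p)"
  proof (rule Cf_FZ)
    show "Cf UNIV K0 (\<lambda>x p. complex_of_real (\<psi> x $ k))" for k
      unfolding \<psi>_def by (rule Cf_sat_coord[OF r0])
    show "det (NC (\<psi> x)) \<noteq> 0" for x using goodX[OF \<psi>_in] by blast
    show "det (LZ (fst p) (\<psi> x)) \<noteq> 0" if "p \<in> K0" for x p
      using goodX[OF \<psi>_in] that by (auto simp: K0_def)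
  qed simp
  show ?thesis
  proof (rule lowerC1_from_rep[OF Cfg cK0 cont_emb cont_dec dec_emb])
    show "open (ball x0 r)" "x0 \<in> ball x0 r" using r0 by auto
    fix x assume x: "x \<in> ball x0 r"
    have xX: "x \<in> X0" using x re e(2) by auto
    have px: "\<psi> x = x" by (rule \<psi>_id[OF x])
    have cx: "continuous_on K0 (FZ x)"
    proof -
      have "continuous_on K0 (\<lambda>p. FZ (\<psi> (fst (x, p))) (snd (x, p)))"
        by (rule continuous_on_compose2[OF Cf_cont[OF Cfg]])
          (auto intro!: continuous_on_Pair continuous_on_const continuous_on_id)
      then show ?thesis using px by simp
    qed
    have wpx: "well_posed D11 blk x" using goodX[OF xX] by (intro NC_wp) blast
    have "(\<exists>p\<in>K0. Re (FZ x p) = hplus A B1 B2 C1 C2 D11 D12 D21 D22 blk x)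
       \<and> (\<forall>p\<in>K0. Re (FZ x p) \<le> hplus A B1 B2 C1 C2 D11 D12 D21 D22 blk x)"
      unfolding K0_def by (rule hplus_rep[OF wpx]) (use goodX[OF xX] cx in \<open>auto simp: K0_def\<close>)
    then show "(\<exists>p\<in>K0. Re (FZ (\<psi> x) p) = hplus A B1 B2 C1 C2 D11 D12 D21 D22 blk x)
       \<and> (\<forall>p\<in>K0. Re (FZ (\<psi> x) p) \<le> hplus A B1 B2 C1 C2 D11 D12 D21 D22 blk x)"
      using px by simp
  qed
qed

end

theorem proposition2:
  fixes A :: "real^'x^'x" and B1 :: "real^'r^'x" and B2 :: "real^'w^'x"
    and C1 :: "real^'x^'r" and C2 :: "real^'x^'z"
    and D11 :: "real^'r^'r" and D12 :: "real^'w^'r"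
    and D21 :: "real^'r^'z" and D22 :: "real^'w^'z"
    and blk :: "'r \<Rightarrow> 'm::finite"
  shows "lower_C1_on (hplus A B1 B2 C1 C2 D11 D12 D21 D22 blk) (stab_set A B1 C1 D11 blk)
       \<and> upper_C1_on (\<lambda>\<delta>. - hplus A B1 B2 C1 C2 D11 D12 D21 D22 blk \<delta>) (stab_set A B1 C1 D11 blk)"
proof -
  have L: "lower_C1_on (hplus A B1 B2 C1 C2 D11 D12 D21 D22 blk) (stab_set A B1 C1 D11 blk)"
    unfolding lower_C1_on_def using main_lemma by blast
  then show ?thesis unfolding upper_C1_on_def by simp
qed

end
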